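(* Let $\Gamma$ be an $\mathbb N$-metrised graph without loops, and let $G$ be its underlying graph. Let $H$ be the graph obtained from $G$ by subdividing every edge $\{e,i(e)\}$ exactly $l(e)-1$ times. Then $\operatorname{dgon}(\Gamma)\ge\operatorname{dgon}(H)$.
   Context: A graph is $(X,r,i)$, $X$ finite, $r$ idempotent, $i$ an involution, $i(x)=x\iff r(x)=x$; vertices $V$ = fixed points, half-edges $H=X\setminus V$, edges $\{e,i(e)\}$ joining $r(e),r(i(e))$, $H_v=\{e\in H:r(e)=v\}$; graphs are connected. A loop is an edge with $r(e)=r(i(e))$. An $\mathbb N$-metrised graph adds $l:X\to\mathbb N$ with $l(i(x))=l(x)$, $l(x)=0\iff x\in V$; its underlying graph is $(X,r,i)$. A subdivision operation replaces an edge $\{e,i(e)\}$ by a new vertex $w$ and two edges joining $r(e)$ to $w$ and $w$ to $r(i(e))$. For an $\mathbb N$-metrised graph: $\operatorname{PL}(\Gamma)=\{g:V\to\mathbb Z: g(r(e))-g(r(i(e)))\in l(e)\mathbb Z\ \forall e\}$; $\Delta(g)=\sum_v\big(\sum_{e\in H_v}\frac{g(v)-g(r(i(e)))}{l(e)}\big)[v]$; $D\sim D'$ iff $D-D'\in\Delta(\operatorname{PL})$; $|D|=\{E\ge0:E\sim D\}$; $r(D)=\max\{k:|D-F|\ne\emptyset$ for all effective $F$ of degree $k\}$; $\operatorname{dgon}=\min\{\deg D: r(D)\ge1\}$. The divisorial gonality of an unmetrised graph is that of the $\mathbb N$-metrised graph with all edge lengths $1$. *)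

theory Defs
  imports Main
begin

definition vertices :: "'a set \<Rightarrow> ('a \<Rightarrow> 'a) \<Rightarrow> 'a set" where
  "vertices X r = {x \<in> X. r x = x}"

definition half_edges :: "'a set \<Rightarrow> ('a \<Rightarrow> 'a) \<Rightarrow> 'a set" where
  "half_edges X r = {x \<in> X. r x \<noteq> x}"

definition adjacent :: "'a set \<Rightarrow> ('a \<Rightarrow> 'a) \<Rightarrow> ('a \<Rightarrow> 'a) \<Rightarrow> ('a \<times> 'a) set" where
  "adjacent X r i = {(r e, r (i e)) | e. e \<in> half_edges X r}"

definition is_graph :: "'a set \<Rightarrow> ('a \<Rightarrow> 'a) \<Rightarrow> ('a \<Rightarrow> 'a) \<Rightarrow> bool" where
  "is_graph X r i \<longleftrightarrow> finite X \<and> X \<noteq> {} \<and>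
     (\<forall>x\<in>X. r x \<in> X \<and> i x \<in> X \<and> r (r x) = r x \<and> i (i x) = x \<and> (i x = x \<longleftrightarrow> r x = x)) \<and>
     (\<forall>u\<in>vertices X r. \<forall>v\<in>vertices X r. (u, v) \<in> (adjacent X r i)\<^sup>*)"

definition is_Nmetrised_graph ::
  "'a set \<Rightarrow> ('a \<Rightarrow> 'a) \<Rightarrow> ('a \<Rightarrow> 'a) \<Rightarrow> ('a \<Rightarrow> nat) \<Rightarrow> bool" where
  "is_Nmetrised_graph X r i l \<longleftrightarrow> is_graph X r i \<and>
     (\<forall>x\<in>X. l (i x) = l x \<and> (l x = 0 \<longleftrightarrow> r x = x))"

definition divisors :: "'a set \<Rightarrow> ('a \<Rightarrow> 'a) \<Rightarrow> ('a \<Rightarrow> int) set" where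
  "divisors X r = {D. \<forall>x. x \<notin> vertices X r \<longrightarrow> D x = 0}"

definition effective :: "('a \<Rightarrow> int) \<Rightarrow> bool" where
  "effective D \<longleftrightarrow> (\<forall>x. D x \<ge> 0)"

definition deg :: "'a set \<Rightarrow> ('a \<Rightarrow> 'a) \<Rightarrow> ('a \<Rightarrow> int) \<Rightarrow> int" where
  "deg X r D = (\<Sum>v\<in>vertices X r. D v)"

definition PL :: "'a set \<Rightarrow> ('a \<Rightarrow> 'a) \<Rightarrow> ('a \<Rightarrow> 'a) \<Rightarrow> ('a \<Rightarrow> nat) \<Rightarrow> ('a \<Rightarrow> int) set" where
  "PL X r i l = {g. \<forall>e\<in>half_edges X r. int (l e) dvd (g (r e) - g (r (i e)))}"

definition laplacian ::
  "'a set \<Rightarrow> ('a \<Rightarrow> 'a) \<Rightarrow> ('a \<Rightarrow> 'a) \<Rightarrow> ('a \<Rightarrow> nat) \<Rightarrow> ('a \<Rightarrow> int) \<Rightarrow> ('a \<Rightarrow> int)" where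
  "laplacian X r i l g = (\<lambda>v. if v \<in> vertices X r then
      (\<Sum>e\<in>{e\<in>half_edges X r. r e = v}. (g v - g (r (i e))) div int (l e)) else 0)"

definition lin_equiv ::
  "'a set \<Rightarrow> ('a \<Rightarrow> 'a) \<Rightarrow> ('a \<Rightarrow> 'a) \<Rightarrow> ('a \<Rightarrow> nat) \<Rightarrow> ('a \<Rightarrow> int) \<Rightarrow> ('a \<Rightarrow> int) \<Rightarrow> bool" where
  "lin_equiv X r i l D D' \<longleftrightarrow> (\<exists>g\<in>PL X r i l. (\<lambda>x. D x - D' x) = laplacian X r i l g)"

definition linsys ::
  "'a set \<Rightarrow> ('a \<Rightarrow> 'a) \<Rightarrow> ('a \<Rightarrow> 'a) \<Rightarrow> ('a \<Rightarrow> nat) \<Rightarrow> ('a \<Rightarrow> int) \<Rightarrow> ('a \<Rightarrow> int) set" where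
  "linsys X r i l D = {E \<in> divisors X r. effective E \<and> lin_equiv X r i l E D}"

definition rank ::
  "'a set \<Rightarrow> ('a \<Rightarrow> 'a) \<Rightarrow> ('a \<Rightarrow> 'a) \<Rightarrow> ('a \<Rightarrow> nat) \<Rightarrow> ('a \<Rightarrow> int) \<Rightarrow> int" where
  "rank X r i l D = (GREATEST k::int. \<forall>F \<in> divisors X r. effective F \<and> deg X r F = k \<longrightarrow>
      linsys X r i l (\<lambda>x. D x - F x) \<noteq> {})"

definition dgon :: "'a set \<Rightarrow> ('a \<Rightarrow> 'a) \<Rightarrow> ('a \<Rightarrow> 'a) \<Rightarrow> ('a \<Rightarrow> nat) \<Rightarrow> int" where
  "dgon X r i l = (LEAST d::int. \<exists>D\<in>divisors X r. rank X r i l D \<ge> 1 \<and> deg X r D = d)"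

datatype 'a snode = SV 'a | SM 'a nat | SE 'a nat

text \<open>Canonical representative of the edge {e, i e} (depends only on the set).\<close>
definition edge_rep :: "('a \<Rightarrow> 'a) \<Rightarrow> 'a \<Rightarrow> 'a" where
  "edge_rep i e = (SOME x. x \<in> {e, i e})"

text \<open>The vertex of the subdivided path at distance j from r e along the edge of e.\<close>
definition sub_node :: "('a \<Rightarrow> 'a) \<Rightarrow> ('a \<Rightarrow> 'a) \<Rightarrow> ('a \<Rightarrow> nat) \<Rightarrow> 'a \<Rightarrow> nat \<Rightarrow> 'a snode" where
  "sub_node r i l e j = (if j = 0 then SV (r e) else if j = l e then SV (r (i e))
      else if edge_rep i e = e then SM e j else SM (i e) (l e - j))"

definition subd_X :: "'a set \<Rightarrow> ('a \<Rightarrow> 'a) \<Rightarrow> ('a \<Rightarrow> 'a) \<Rightarrow> ('a \<Rightarrow> nat) \<Rightarrow> 'a snode set" where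
  "subd_X X r i l = SV ` vertices X r
     \<union> {SM c j | c j. c \<in> half_edges X r \<and> edge_rep i c = c \<and> 1 \<le> j \<and> j < l c}
     \<union> {SE e j | e j. e \<in> half_edges X r \<and> j < l e}"

fun subd_r :: "('a \<Rightarrow> 'a) \<Rightarrow> ('a \<Rightarrow> 'a) \<Rightarrow> ('a \<Rightarrow> nat) \<Rightarrow> 'a snode \<Rightarrow> 'a snode" where
  "subd_r r i l (SE e j) = sub_node r i l e j"
| "subd_r r i l x = x"

text \<open>Half-edge SE e j goes from distance j to distance j+1 (from r e); its
  opposite is SE (i e) (l e - 1 - j).\<close>
fun subd_i :: "('a \<Rightarrow> 'a) \<Rightarrow> ('a \<Rightarrow> nat) \<Rightarrow> 'a snode \<Rightarrow> 'a snode" where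
  "subd_i i l (SE e j) = SE (i e) (l e - 1 - j)"
| "subd_i i l x = x"

fun unit_len :: "'a snode \<Rightarrow> nat" where
  "unit_len (SE e j) = 1"
| "unit_len x = 0"

end

theory Submission
  imports Defs
begin


definition lap :: "'a set \<Rightarrow> ('a \<Rightarrow> 'a) \<Rightarrow> ('a \<Rightarrow> 'a) \<Rightarrow> ('a \<Rightarrow> int) \<Rightarrow> 'a \<Rightarrow> int" where
  "lap X r i h v = (\<Sum>e\<in>{e\<in>half_edges X r. r e = v}. h v - h (r (i e)))"

definition stc :: "'a set \<Rightarrow> ('a \<Rightarrow> 'a) \<Rightarrow> ('a \<Rightarrow> 'a) \<Rightarrow> bool" where
  "stc X r i \<longleftrightarrow> finite X \<and> (\<forall>e\<in>half_edges X r. i e \<in> half_edges X r \<and> i (i e) = e \<and> r e \<in> vertices X r)"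

lemma stcD:
  assumes "stc X r i" "e \<in> half_edges X r"
  shows "i e \<in> half_edges X r" "i (i e) = e" "r e \<in> vertices X r" "r (i e) \<in> vertices X r"
  using assms unfolding stc_def by auto

lemma stc_fin: "stc X r i \<Longrightarrow> finite X" "stc X r i \<Longrightarrow> finite (vertices X r)"
  "stc X r i \<Longrightarrow> finite (half_edges X r)"
  unfolding stc_def vertices_def half_edges_def by auto

lemma pair_sum:
  fixes \<phi> :: "'a \<Rightarrow> int"
  assumes st: "stc X r i" and neg: "\<forall>e\<in>half_edges X r. \<phi> (i e) = - \<phi> e"
  shows "(\<Sum>v\<in>vertices X r. \<Sum>e\<in>{e\<in>half_edges X r. r e = v}. \<phi> e) = 0"
proof -
  let ?H = "half_edges X r"
  have fH: "finite ?H" and fV: "finite (vertices X r)" using stc_fin[OF st] by auto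
  have "(\<Sum>v\<in>vertices X r. \<Sum>e\<in>{e\<in>?H. r e = v}. \<phi> e) = sum \<phi> ?H"
    using sum.group[OF fH fV, of r \<phi>] stcD(3)[OF st] by auto
  moreover have "sum (\<lambda>e. \<phi> (i e)) ?H = sum \<phi> ?H"
  proof (rule sum.reindex_bij_betw)
    show "bij_betw i ?H ?H"
      unfolding bij_betw_def inj_on_def image_def
    proof (intro conjI ballI impI equalityI subsetI)
      fix x y assume "x \<in> ?H" "y \<in> ?H" "i x = i y" thus "x = y" by (metis stcD(2)[OF st])
    next
      fix x assume "x \<in> {y. \<exists>x\<in>?H. y = i x}" thus "x \<in> ?H" using stcD(1)[OF st] by auto
    next
      fix x assume "x \<in> ?H" thus "x \<in> {y. \<exists>x\<in>?H. y = i x}" using stcD(1,2)[OF st] by (metis (mono_tags) mem_Collect_eq)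
    qed
  qed
  moreover have "sum (\<lambda>e. \<phi> (i e)) ?H = - sum \<phi> ?H"
    using neg by (simp add: sum_negf[symmetric])
  ultimately show ?thesis by simp
qed

lemma lap_sum0:
  assumes st: "stc X r i"
  shows "(\<Sum>v\<in>vertices X r. lap X r i h v) = 0"
proof -
  have "(\<Sum>v\<in>vertices X r. lap X r i h v) =
     (\<Sum>v\<in>vertices X r. \<Sum>e\<in>{e\<in>half_edges X r. r e = v}. h (r e) - h (r (i e)))"
    unfolding lap_def by (intro sum.cong refl) auto
  also have "\<dots> = 0"
    by (rule pair_sum[OF st]) (use stcD[OF st] in auto)
  finally show ?thesis .
qed

lemma lap_diff: "lap X r i (\<lambda>v. f v - g v) v = lap X r i f v - lap X r i g v"
  unfolding lap_def sum_subtractf[symmetric] by (intro sum.cong) auto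

lemma lap_add: "lap X r i (\<lambda>v. f v + g v) v = lap X r i f v + lap X r i g v"
  unfolding lap_def sum.distrib[symmetric] by (intro sum.cong) auto

lemma lap_shift: "lap X r i (\<lambda>v. f v + c) v = lap X r i f v"
  unfolding lap_def by simp

lemma lap_shift2: "lap X r i (\<lambda>v. f v - c) v = lap X r i f v"
  unfolding lap_def by simp

lemma lap_cong:
  assumes st: "stc X r i" and v: "f v = g v" and eq: "\<forall>w\<in>vertices X r. f w = g w"
  shows "lap X r i f v = lap X r i g v"
  unfolding lap_def using stcD(4)[OF st] v eq by (intro sum.cong refl) auto

lemma lap_mono:
  assumes st: "stc X r i" and v: "f v = g v" and le: "\<forall>w\<in>vertices X r. f w \<le> g w"
  shows "lap X r i f v \<ge> lap X r i g v"
  unfolding lap_def using stcD(4)[OF st] v le by (intro sum_mono) auto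

definition good :: "'a set \<Rightarrow> ('a \<Rightarrow> 'a) \<Rightarrow> ('a \<Rightarrow> 'a) \<Rightarrow> ('a \<Rightarrow> int) \<Rightarrow> ('a \<Rightarrow> int) \<Rightarrow> bool" where
  "good X r i D h \<longleftrightarrow> (\<forall>v\<in>vertices X r. 0 \<le> D v + lap X r i h v)"

lemma lap_min:
  assumes st: "stc X r i" and v: "v \<in> vertices X r"
  shows "lap X r i (\<lambda>w. min (f w) (g w)) v \<ge> (if f v \<le> g v then lap X r i f v else lap X r i g v)"
proof (cases "f v \<le> g v")
  case True
  have "lap X r i (\<lambda>w. min (f w) (g w)) v \<ge> lap X r i f v"
    unfolding lap_def using True by (intro sum_mono) auto
  then show ?thesis using True by simp
next
  case False
  have "lap X r i (\<lambda>w. min (f w) (g w)) v \<ge> lap X r i g v"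
    unfolding lap_def using False by (intro sum_mono) auto
  then show ?thesis using False by simp
qed

lemma good_min:
  assumes st: "stc X r i" and "good X r i D f" "good X r i D g"
  shows "good X r i D (\<lambda>w. min (f w) (g w))"
  unfolding good_def
proof
  fix v assume v: "v \<in> vertices X r"
  show "0 \<le> D v + lap X r i (\<lambda>w. min (f w) (g w)) v"
    using lap_min[OF st v, of f g] assms(2,3) v unfolding good_def
    by (smt (verit))
qed

lemma lap_const: "lap X r i (\<lambda>w. c) v = 0"
  unfolding lap_def by simp

lemma good_const: "\<forall>v\<in>vertices X r. 0 \<le> D v \<Longrightarrow> good X r i D (\<lambda>w. c)"
  unfolding good_def lap_const by simp

lemma good_cong:
  assumes st: "stc X r i" and "good X r i D f" and "\<forall>w\<in>vertices X r. f w = g w"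
  shows "good X r i D g"
  using assms lap_cong[OF st, of f _ g] unfolding good_def by auto



definition conn :: "'a set \<Rightarrow> ('a \<Rightarrow> 'a) \<Rightarrow> ('a \<Rightarrow> 'a) \<Rightarrow> bool" where
  "conn X r i \<longleftrightarrow> (\<forall>u\<in>vertices X r. \<forall>v\<in>vertices X r. (u, v) \<in> (adjacent X r i)\<^sup>*)"

lemma harmonic:
  assumes st: "stc X r i" and cn: "conn X r i"
    and harm: "\<forall>v\<in>vertices X r. lap X r i f v = 0" and q: "q \<in> vertices X r"
  shows "\<forall>v\<in>vertices X r. f v = f q"
proof -
  let ?V = "vertices X r"
  have fV: "finite ?V" using stc_fin[OF st] by auto
  define M where "M = Max (f ` ?V)"
  have ne: "f ` ?V \<noteq> {}" using q by auto
  have "M \<in> f ` ?V" unfolding M_def using Max_in[OF _ ne] fV by blast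
  then obtain v0 where v0: "v0 \<in> ?V" "f v0 = M" by blast
  have le: "\<And>w. w \<in> ?V \<Longrightarrow> f w \<le> M" unfolding M_def using fV by (simp add: Max_ge)
  have closed: "f (r (i e)) = M" if e: "e \<in> half_edges X r" and fy: "f (r e) = M" for e
  proof -
    let ?S = "{e' \<in> half_edges X r. r e' = r e}"
    have fS: "finite ?S" using stc_fin(3)[OF st] by auto
    have nn: "\<forall>e'\<in>?S. 0 \<le> f (r e) - f (r (i e'))"
    proof
      fix e' assume "e' \<in> ?S"
      hence "r (i e') \<in> ?V" using stcD(4)[OF st] by blast
      thus "0 \<le> f (r e) - f (r (i e'))" using le fy by fastforce
    qed
    have "lap X r i f (r e) = 0" using harm stcD(3)[OF st e] by auto
    hence "(\<Sum>e'\<in>?S. f (r e) - f (r (i e'))) = 0" unfolding lap_def .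
    hence "\<forall>e'\<in>?S. f (r e) - f (r (i e')) = 0" by (subst (asm) sum_nonneg_eq_0_iff[OF fS]) (use nn in auto)
    moreover have "e \<in> ?S" using e by blast
    ultimately have "f (r e) - f (r (i e)) = 0" by blast
    thus ?thesis using fy by simp
  qed
  have all: "f w = M" if "(v0, w) \<in> (adjacent X r i)\<^sup>*" for w
    using that
  proof (induction rule: rtrancl_induct)
    case base thus ?case using v0 by simp
  next
    case (step y z)
    then obtain e where "e \<in> half_edges X r" "y = r e" "z = r (i e)" unfolding adjacent_def by auto
    thus ?case using closed step.IH by simp
  qed
  show ?thesis
  proof
    fix v assume v: "v \<in> ?V"
    have "(v0, v) \<in> (adjacent X r i)\<^sup>*" using cn v v0(1) unfolding conn_def by blast
    hence "f v = M" by (rule all)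
    moreover have "(v0, q) \<in> (adjacent X r i)\<^sup>*" using cn q v0(1) unfolding conn_def by blast
    hence "f q = M" by (rule all)
    ultimately show "f v = f q" by simp
  qed
qed

definition Aset :: "'a set \<Rightarrow> ('a \<Rightarrow> 'a) \<Rightarrow> ('a \<Rightarrow> 'a) \<Rightarrow> ('a \<Rightarrow> int) \<Rightarrow> 'a \<Rightarrow> ('a \<Rightarrow> int) set" where
  "Aset X r i D q = {h. good X r i D h \<and> h q = 0 \<and> (\<forall>v. v \<notin> vertices X r \<longrightarrow> h v = 0)}"

lemma finA:
  assumes st: "stc X r i" and cn: "conn X r i" and q: "q \<in> vertices X r"
  shows "finite (Aset X r i D q)"
proof -
  let ?V = "vertices X r"
  let ?A = "Aset X r i D q"
  have fV: "finite ?V" using stc_fin[OF st] by auto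
  define \<phi> where "\<phi> h = (\<lambda>v. if v \<in> ?V then D v + lap X r i h v else 0)" for h
  define d where "d = sum D ?V"
  have sub: "\<phi> ` ?A \<subseteq> {E. \<forall>x. (x \<in> ?V \<longrightarrow> E x \<in> {0..d}) \<and> (x \<notin> ?V \<longrightarrow> E x = 0)}"
  proof
    fix E assume "E \<in> \<phi> ` ?A"
    then obtain h where h: "h \<in> ?A" "E = \<phi> h" by auto
    have nn: "\<forall>v\<in>?V. 0 \<le> D v + lap X r i h v" using h unfolding Aset_def good_def by auto
    have tot: "(\<Sum>v\<in>?V. D v + lap X r i h v) = d"
      unfolding d_def sum.distrib lap_sum0[OF st] by simp
    have "D v + lap X r i h v \<le> d" if "v \<in> ?V" for v
      using member_le_sum[of v ?V "\<lambda>v. D v + lap X r i h v"] nn that fV tot by auto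
    thus "E \<in> {E. \<forall>x. (x \<in> ?V \<longrightarrow> E x \<in> {0..d}) \<and> (x \<notin> ?V \<longrightarrow> E x = 0)}"
      using nn h(2) unfolding \<phi>_def by auto
  qed
  have "finite {E. \<forall>x. (x \<in> ?V \<longrightarrow> E x \<in> {0..d}) \<and> (x \<notin> ?V \<longrightarrow> E x = 0)}"
    by (rule finite_set_of_finite_funs) (use fV in auto)
  hence fin: "finite (\<phi> ` ?A)" using sub finite_subset by blast
  have inj: "inj_on \<phi> ?A"
  proof (rule inj_onI)
    fix h1 h2 assume h1: "h1 \<in> ?A" and h2: "h2 \<in> ?A" and eq: "\<phi> h1 = \<phi> h2"
    have "\<forall>v\<in>?V. lap X r i (\<lambda>v. h1 v - h2 v) v = 0"
    proof
      fix v assume v: "v \<in> ?V"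
      have "\<phi> h1 v = \<phi> h2 v" using eq by simp
      thus "lap X r i (\<lambda>v. h1 v - h2 v) v = 0" using v unfolding \<phi>_def lap_diff by simp
    qed
    from harmonic[OF st cn this q] have "\<forall>v\<in>?V. h1 v - h2 v = h1 q - h2 q" .
    moreover have "h1 q = 0" "h2 q = 0" using h1 h2 unfolding Aset_def by auto
    ultimately show "h1 = h2"
    proof (intro ext)
      fix v
      assume a: "\<forall>v\<in>?V. h1 v - h2 v = h1 q - h2 q" "h1 q = 0" "h2 q = 0"
      show "h1 v = h2 v"
      proof (cases "v \<in> ?V")
        case True thus ?thesis using a by fastforce
      next
        case False thus ?thesis using h1 h2 unfolding Aset_def by auto
      qed
    qed
  qed
  show ?thesis using finite_imageD[OF fin inj] .
qed



definition pathc :: "'a set \<Rightarrow> ('a \<Rightarrow> 'a) \<Rightarrow> ('a \<Rightarrow> 'a) \<Rightarrow> ('a \<Rightarrow> int) \<Rightarrow> (nat \<Rightarrow> 'a) \<Rightarrow> nat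
   \<Rightarrow> (nat \<Rightarrow> 'a) \<Rightarrow> (nat \<Rightarrow> 'a) \<Rightarrow> bool" where
  "pathc X r i D x k a b \<longleftrightarrow> (\<forall>m\<le>k. x m \<in> vertices X r) \<and>
     (\<forall>m. 0 < m \<and> m < k \<longrightarrow> D (x m) = 0 \<and> {e\<in>half_edges X r. r e = x m} = {a m, b m} \<and> a m \<noteq> b m
        \<and> r (i (a m)) = x (m - 1) \<and> r (i (b m)) = x (m + 1))"

lemma lap_int:
  assumes pc: "pathc X r i D x k a b" and m: "0 < m" "m < k"
  shows "lap X r i h (x m) = 2 * h (x m) - h (x (m - 1)) - h (x (m + 1))"
proof -
  have e: "{e\<in>half_edges X r. r e = x m} = {a m, b m}" "a m \<noteq> b m"
     "r (i (a m)) = x (m - 1)" "r (i (b m)) = x (m + 1)"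
    using pc m unfolding pathc_def by blast+
  show ?thesis unfolding lap_def e(1) using e(2-4) by simp
qed

lemma side:
  assumes st: "stc X r i" and pc: "pathc X r i D x k a b" and jk: "0 < j" "j < k"
    and flat: "\<forall>h. good X r i D h \<longrightarrow> h (x (j - 1)) = h (x j) \<and> h (x (j + 1)) = h (x j)"
    and hsA: "hs \<in> Aset X r i D (x j)" and hs0: "D (x j) + lap X r i hs (x j) = 0"
    and MIN: "\<forall>g\<in>Aset X r i D (x j). (\<forall>v\<in>vertices X r. g v \<le> hs v) \<longrightarrow> (\<forall>v\<in>vertices X r. g v = hs v)"
    and hu: "\<exists>h. good X r i D h \<and> 1 \<le> D (x 0) + lap X r i h (x 0)"
  shows "\<exists>m<j. 1 \<le> D (x m) + lap X r i hs (x m)"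
proof (rule ccontr)
  let ?V = "vertices X r"
  assume "\<not> ?thesis"
  hence none: "\<forall>m<j. D (x m) + lap X r i hs (x m) < 1" by auto
  have xV: "\<And>m. m \<le> k \<Longrightarrow> x m \<in> ?V" using pc unfolding pathc_def by blast
  have Dint: "\<And>m. 0 < m \<Longrightarrow> m < k \<Longrightarrow> D (x m) = 0" using pc unfolding pathc_def by blast
  have ghs: "good X r i D hs" and hsq: "hs (x j) = 0" and hsout: "\<forall>v. v \<notin> ?V \<longrightarrow> hs v = 0"
    using hsA unfolding Aset_def by auto
  have z: "lap X r i hs (x m) = 0" if "1 \<le> m" "m \<le> j" for m
  proof (cases "m = j")
    case True thus ?thesis using hs0 Dint jk by simp
  next
    case False
    hence "m < j" using that by simp
    hence "D (x m) + lap X r i hs (x m) < 1" using none by simp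
    moreover have "0 \<le> D (x m) + lap X r i hs (x m)" using ghs xV[of m] \<open>m < j\<close> jk unfolding good_def by simp
    ultimately show ?thesis using Dint[of m] that \<open>m < j\<close> jk by simp
  qed
  have fl: "hs (x (j - 1)) = 0" "hs (x (j + 1)) = 0" using flat ghs hsq by auto
  have zz: "n \<le> j \<longrightarrow> hs (x (j - n)) = 0 \<and> hs (x (j - n + 1)) = 0" for n
  proof (induction n)
    case 0 thus ?case using hsq fl by simp
  next
    case (Suc n)
    show ?case
    proof
      assume n: "Suc n \<le> j"
      define m where "m = j - n"
      have m: "1 \<le> m" "m \<le> j" "m < k" using n jk unfolding m_def by auto
      have ih: "hs (x m) = 0" "hs (x (m + 1)) = 0" using Suc n unfolding m_def by auto
      have "lap X r i hs (x m) = 2 * hs (x m) - hs (x (m - 1)) - hs (x (m + 1))"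
        using lap_int[OF pc, of m] m by simp
      hence "hs (x (m - 1)) = 0" using z[OF m(1,2)] ih by simp
      moreover have "j - Suc n = m - 1" "j - Suc n + 1 = m" using n unfolding m_def by auto
      ultimately show "hs (x (j - Suc n)) = 0 \<and> hs (x (j - Suc n + 1)) = 0" using ih by simp
    qed
  qed
  have hs00: "hs (x 0) = 0" using zz[of j] by simp
  obtain h1 where h1: "good X r i D h1" "1 \<le> D (x 0) + lap X r i h1 (x 0)" using hu by blast
  define h where "h v = h1 v - h1 (x 0)" for v
  have gh: "good X r i D h" using h1(1) unfolding good_def h_def lap_shift2 .
  have h0: "h (x 0) = 0" unfolding h_def by simp
  have laph: "lap X r i h (x 0) = lap X r i h1 (x 0)" unfolding h_def lap_shift2 ..
  have conc: "h (x (m - 1)) + h (x (m + 1)) \<le> 2 * h (x m)" if "0 < m" "m < k" for m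
  proof -
    have "0 \<le> D (x m) + lap X r i h (x m)" using gh xV[of m] that unfolding good_def by simp
    thus ?thesis using lap_int[OF pc that, of h] Dint[OF that] by simp
  qed
  have flh: "h (x (j - 1)) = h (x j)" using flat gh by auto
  have A: "d < j \<longrightarrow> h (x (j - d - 1)) \<le> h (x (j - d))" for d
  proof (induction d)
    case 0 thus ?case using flh by simp
  next
    case (Suc d)
    show ?case
    proof
      assume d: "Suc d < j"
      define m where "m = j - Suc d"
      have m: "0 < m" "m < k" using d jk unfolding m_def by auto
      have ih: "h (x m) \<le> h (x (m + 1))" using Suc d unfolding m_def
        by (metis Suc_diff_Suc Suc_eq_plus1 Suc_lessD diff_diff_left plus_1_eq_Suc)
      have "h (x (m - 1)) \<le> h (x m)" using conc[OF m] ih by simp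
      moreover have "j - Suc d - 1 = m - 1" "j - Suc d = m" unfolding m_def by auto
      ultimately show "h (x (j - Suc d - 1)) \<le> h (x (j - Suc d))" by simp
    qed
  qed
  have B: "n \<le> j \<longrightarrow> h (x 0) \<le> h (x n)" for n
  proof (induction n)
    case 0 thus ?case by simp
  next
    case (Suc n)
    show ?case
    proof
      assume n: "Suc n \<le> j"
      have "h (x (j - (j - n - 1) - 1)) \<le> h (x (j - (j - n - 1)))" using A[of "j - n - 1"] n by simp
      moreover have "j - (j - n - 1) - 1 = n" "j - (j - n - 1) = Suc n" using n by auto
      ultimately show "h (x 0) \<le> h (x (Suc n))" using Suc n by simp
    qed
  qed
  have hj: "0 \<le> h (x j)" using B[of j] h0 by simp
  define g where "g v = (if v \<in> ?V then min (h v) (hs v) else 0)" for v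
  have "good X r i D (\<lambda>v. min (h v) (hs v))" by (rule good_min[OF st gh ghs])
  hence gg: "good X r i D g" by (rule good_cong[OF st]) (simp add: g_def)
  have gA: "g \<in> Aset X r i D (x j)"
    unfolding Aset_def using gg hj hsq xV[of j] jk unfolding g_def by auto
  have "\<forall>v\<in>?V. g v \<le> hs v" unfolding g_def by auto
  hence eq: "\<forall>v\<in>?V. g v = hs v" using MIN gA by blast
  have le: "\<forall>v\<in>?V. hs v \<le> h v"
  proof
    fix v assume v: "v \<in> ?V"
    thus "hs v \<le> h v" using eq unfolding g_def by (metis min.cobounded1)
  qed
  have "lap X r i hs (x 0) \<ge> lap X r i h (x 0)" by (rule lap_mono[OF st]) (use hs00 h0 le in auto)
  hence "1 \<le> D (x 0) + lap X r i hs (x 0)" using h1(2) laph by simp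
  thus False using none jk by auto
qed



lemma pathc_rev:
  assumes pc: "pathc X r i D x k a b"
  shows "pathc X r i D (\<lambda>m. x (k - m)) k (\<lambda>m. b (k - m)) (\<lambda>m. a (k - m))"
  unfolding pathc_def
proof (intro conjI allI impI)
  fix m assume "m \<le> k" thus "x (k - m) \<in> vertices X r" using pc unfolding pathc_def by auto
next
  fix m assume m: "0 < m \<and> m < k"
  hence m': "0 < k - m" "k - m < k" by auto
  have P: "D (x (k - m)) = 0 \<and> {e\<in>half_edges X r. r e = x (k - m)} = {a (k - m), b (k - m)} \<and> a (k - m) \<noteq> b (k - m)
        \<and> r (i (a (k - m))) = x (k - m - 1) \<and> r (i (b (k - m))) = x (k - m + 1)"
    using pc m' unfolding pathc_def by blast
  have i1: "k - m - 1 = k - (m + 1)" "k - m + 1 = k - (m - 1)" using m by auto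
  show "D (x (k - m)) = 0" using P by simp
  show "{e\<in>half_edges X r. r e = x (k - m)} = {b (k - m), a (k - m)}" using P by auto
  show "b (k - m) \<noteq> a (k - m)" using P by auto
  show "r (i (b (k - m))) = x (k - (m - 1))" using P i1 by simp
  show "r (i (a (k - m))) = x (k - (m + 1))" using P i1 by simp
qed

lemma key:
  assumes st: "stc X r i" and cn: "conn X r i" and Dnn: "\<forall>v\<in>vertices X r. 0 \<le> D v"
    and pc: "pathc X r i D x k a b" and inj: "inj_on x {..k}" and jk: "0 < j" "j < k"
    and hu: "\<exists>h. good X r i D h \<and> 1 \<le> D (x 0) + lap X r i h (x 0)"
    and hw: "\<exists>h. good X r i D h \<and> 1 \<le> D (x k) + lap X r i h (x k)"
  shows "\<exists>h. good X r i D h \<and> 1 \<le> lap X r i h (x j)"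
proof (rule ccontr)
  let ?V = "vertices X r"
  let ?q = "x j"
  assume "\<not> ?thesis"
  hence C: "\<And>h. good X r i D h \<Longrightarrow> lap X r i h ?q \<le> 0" by force
  have xV: "\<And>m. m \<le> k \<Longrightarrow> x m \<in> ?V" using pc unfolding pathc_def by blast
  have Dint: "\<And>m. 0 < m \<Longrightarrow> m < k \<Longrightarrow> D (x m) = 0" using pc unfolding pathc_def by blast
  have qV: "?q \<in> ?V" using xV jk by simp
  have fV: "finite ?V" using stc_fin[OF st] by auto
  have flat: "\<forall>h. good X r i D h \<longrightarrow> h (x (j - 1)) = h ?q \<and> h (x (j + 1)) = h ?q"
  proof (intro allI impI)
    fix h assume gh: "good X r i D h"
    define g where "g v = min (h v) (h ?q)" for v
    have gg: "good X r i D g" unfolding g_def by (rule good_min[OF st gh good_const[OF Dnn]])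
    have "lap X r i g ?q \<le> 0" by (rule C[OF gg])
    hence "2 * g ?q - g (x (j - 1)) - g (x (j + 1)) \<le> 0" using lap_int[OF pc jk] by simp
    hence a1: "h (x (j - 1)) \<ge> h ?q" "h (x (j + 1)) \<ge> h ?q" unfolding g_def by auto
    have "0 \<le> D ?q + lap X r i h ?q" using gh qV unfolding good_def by simp
    hence "0 \<le> 2 * h ?q - h (x (j - 1)) - h (x (j + 1))" using lap_int[OF pc jk] Dint[OF jk] by simp
    thus "h (x (j - 1)) = h ?q \<and> h (x (j + 1)) = h ?q" using a1 by simp
  qed
  let ?A = "Aset X r i D ?q"
  have finA: "finite ?A" by (rule finA[OF st cn qV])
  obtain h1 where h1: "good X r i D h1" using hu by blast
  define h0 where "h0 v = (if v \<in> ?V then h1 v - h1 ?q else 0)" for v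
  have "good X r i D (\<lambda>v. h1 v - h1 ?q)" using h1 unfolding good_def lap_shift2 .
  hence "good X r i D h0" by (rule good_cong[OF st]) (simp add: h0_def)
  hence h0A: "h0 \<in> ?A" unfolding Aset_def h0_def using qV by auto
  let ?S = "(\<lambda>g. sum g ?V) ` ?A"
  have "Min ?S \<in> ?S" using h0A finA by (intro Min_in) auto
  then obtain hs where hsA: "hs \<in> ?A" and hsm: "sum hs ?V = Min ?S" by auto
  have hsle: "\<forall>g\<in>?A. sum hs ?V \<le> sum g ?V" using hsm finA by simp
  have MIN: "\<forall>g\<in>?A. (\<forall>v\<in>?V. g v \<le> hs v) \<longrightarrow> (\<forall>v\<in>?V. g v = hs v)"
  proof (intro ballI impI)
    fix g v assume gA: "g \<in> ?A" and le: "\<forall>v\<in>?V. g v \<le> hs v" and v: "v \<in> ?V"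
    show "g v = hs v"
    proof (rule ccontr)
      assume "g v \<noteq> hs v"
      hence "g v < hs v" using le v by force
      hence "sum g ?V < sum hs ?V" using sum_strict_mono_ex1[OF fV] le v by blast
      thus False using hsle gA by force
    qed
  qed
  have ghs: "good X r i D hs" and hsq: "hs ?q = 0" and hsout: "\<forall>v. v \<notin> ?V \<longrightarrow> hs v = 0"
    using hsA unfolding Aset_def by auto
  have hs0: "D ?q + lap X r i hs ?q = 0"
    using C[OF ghs] ghs qV Dint[OF jk] unfolding good_def by force
  obtain p where p: "p < j" "1 \<le> D (x p) + lap X r i hs (x p)"
    using side[OF st pc jk flat hsA hs0 MIN hu] by blast
  have pc': "pathc X r i D (\<lambda>m. x (k - m)) k (\<lambda>m. b (k - m)) (\<lambda>m. a (k - m))" by (rule pathc_rev[OF pc])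
  have jk': "0 < k - j" "k - j < k" using jk by auto
  have kk: "k - (k - j) = j" "k - (k - j - 1) = j + 1" "k - (k - j + 1) = j - 1" using jk by auto
  have flat': "\<forall>h. good X r i D h \<longrightarrow> h (x (k - (k - j - 1))) = h (x (k - (k - j))) \<and>
       h (x (k - (k - j + 1))) = h (x (k - (k - j)))"
    using flat kk by simp
  have hu': "\<exists>h. good X r i D h \<and> 1 \<le> D (x (k - 0)) + lap X r i h (x (k - 0))" using hw by simp
  have hsA': "hs \<in> Aset X r i D (x (k - (k - j)))" using hsA kk by simp
  have hs0': "D (x (k - (k - j))) + lap X r i hs (x (k - (k - j))) = 0" using hs0 kk by simp
  have MIN': "\<forall>g\<in>Aset X r i D (x (k - (k - j))). (\<forall>v\<in>?V. g v \<le> hs v) \<longrightarrow> (\<forall>v\<in>?V. g v = hs v)"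
    using MIN kk by simp
  obtain m' where m': "m' < k - j" "1 \<le> D (x (k - m')) + lap X r i hs (x (k - m'))"
    using side[OF st pc' jk' flat' hsA' hs0' MIN' hu'] by blast
  define s where "s = k - m'"
  have s: "j < s" "s \<le> k" "1 \<le> D (x s) + lap X r i hs (x s)" using m' unfolding s_def by auto
  define I where "I = x ` {p<..<s}"
  have qI: "?q \<in> I" unfolding I_def using p s by auto
  have pI: "x p \<notin> I"
  proof
    assume "x p \<in> I"
    then obtain m where m: "m \<in> {p<..<s}" "x p = x m" unfolding I_def by auto
    have "p = m" using inj_onD[OF inj m(2)] m(1) s p jk by auto
    thus False using m by simp
  qed
  have ps: "x p \<noteq> x s"
  proof
    assume "x p = x s" hence "p = s" using inj_onD[OF inj] s p jk by auto
    thus False using s p by simp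
  qed
  define h' where "h' v = (if v \<in> ?V then (if v \<in> I then hs v else hs v - 1) else 0)" for v
  have h'le: "\<forall>w\<in>?V. h' w \<le> hs w" unfolding h'_def by auto
  have Csub: "{e\<in>half_edges X r. r e = v \<and> r (i e) \<in> I} \<subseteq>
     {e. v = x p \<and> e = i (a (Suc p))} \<union> {e. v = x s \<and> e = i (b (s - 1))}"
    if v: "v \<in> ?V" "v \<notin> I" for v
  proof
    fix e assume e: "e \<in> {e\<in>half_edges X r. r e = v \<and> r (i e) \<in> I}"
    then obtain m where m: "m \<in> {p<..<s}" "r (i e) = x m" unfolding I_def by auto
    have m0: "0 < m" "m < k" using m(1) s by auto
    have ie: "i e \<in> half_edges X r" "i (i e) = e" using e stcD[OF st] by auto
    have P: "{e\<in>half_edges X r. r e = x m} = {a m, b m}"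
        "r (i (a m)) = x (m - 1)" "r (i (b m)) = x (m + 1)"
      using pc m0 unfolding pathc_def by blast+
    have "i e \<in> {a m, b m}" using ie m(2) P(1) by blast
    thus "e \<in> {e. v = x p \<and> e = i (a (Suc p))} \<union> {e. v = x s \<and> e = i (b (s - 1))}"
    proof
      assume ia: "i e = a m"
      hence rv: "v = x (m - 1)" using e P(2) ie(2) by (metis (mono_tags, lifting) mem_Collect_eq)
      have "m - 1 \<notin> {p<..<s}" using v(2) rv unfolding I_def by auto
      hence "m - 1 = p" using m(1) by auto
      hence "m = Suc p" using m0 by simp
      thus ?thesis using rv ia ie(2) \<open>m - 1 = p\<close> by auto
    next
      assume "i e \<in> {b m}"
      hence ib: "i e = b m" by simp
      hence rv: "v = x (m + 1)" using e P(3) ie(2) by (metis (mono_tags, lifting) mem_Collect_eq)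
      have "m + 1 \<notin> {p<..<s}" using v(2) rv unfolding I_def by auto
      hence "m + 1 = s" using m(1) by auto
      hence "m = s - 1" by simp
      thus ?thesis using rv ib ie(2) \<open>m + 1 = s\<close> by auto
    qed
  qed
  have lapout: "lap X r i h' v = lap X r i hs v - int (card {e\<in>half_edges X r. r e = v \<and> r (i e) \<in> I})"
    if v: "v \<in> ?V" "v \<notin> I" for v
  proof -
    let ?E = "{e\<in>half_edges X r. r e = v}"
    have fE: "finite ?E" using stc_fin(3)[OF st] by auto
    have "lap X r i h' v = (\<Sum>e\<in>?E. (hs v - hs (r (i e))) - (if r (i e) \<in> I then 1 else 0))"
      unfolding lap_def
    proof (rule sum.cong[OF refl])
      fix e assume "e \<in> ?E"
      hence "r (i e) \<in> ?V" using stcD(4)[OF st] by auto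
      thus "h' v - h' (r (i e)) = (hs v - hs (r (i e))) - (if r (i e) \<in> I then 1 else 0)"
        using v unfolding h'_def by auto
    qed
    also have "\<dots> = lap X r i hs v - (\<Sum>e\<in>?E. (if r (i e) \<in> I then 1 else 0))"
      unfolding lap_def sum_subtractf ..
    also have "(\<Sum>e\<in>?E. (if r (i e) \<in> I then 1 else 0)) = (\<Sum>e\<in>{e\<in>?E. r (i e) \<in> I}. (1::int))"
      using sum.inter_filter[OF fE, of "\<lambda>_. (1::int)" "\<lambda>e. r (i e) \<in> I"] by simp
    also have "{e\<in>?E. r (i e) \<in> I} = {e\<in>half_edges X r. r e = v \<and> r (i e) \<in> I}" by auto
    finally show ?thesis by simp
  qed
  have gh': "good X r i D h'"
    unfolding good_def
  proof
    fix v assume v: "v \<in> ?V"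
    show "0 \<le> D v + lap X r i h' v"
    proof (cases "v \<in> I")
      case True
      have "lap X r i h' v \<ge> lap X r i hs v" by (rule lap_mono[OF st]) (use h'le v True in \<open>auto simp: h'_def\<close>)
      thus ?thesis using ghs v unfolding good_def by force
    next
      case False
      let ?C = "{e\<in>half_edges X r. r e = v \<and> r (i e) \<in> I}"
      have fC: "finite ?C" using stc_fin(3)[OF st] by auto
      have "int (card ?C) \<le> D v + lap X r i hs v"
      proof (cases "v = x p")
        case True
        hence "?C \<subseteq> {i (a (Suc p))}" using Csub[OF v False] ps by auto
        hence "card ?C \<le> 1" using card_mono[of "{i (a (Suc p))}" ?C] by simp
        thus ?thesis using p True by simp
      next
        case F1: False
        show ?thesis
        proof (cases "v = x s")
          case True
          hence "?C \<subseteq> {i (b (s - 1))}" using Csub[OF v False] ps by auto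
          hence "card ?C \<le> 1" using card_mono[of "{i (b (s - 1))}" ?C] by simp
          thus ?thesis using s True by simp
        next
          case False
          hence "?C = {}" using Csub[OF v \<open>v \<notin> I\<close>] F1 by auto
          hence "card ?C = 0" by (simp only: card.empty)
          thus ?thesis using ghs v unfolding good_def by simp
        qed
      qed
      thus ?thesis using lapout[OF v False] by simp
    qed
  qed
  have h'A: "h' \<in> ?A" unfolding Aset_def using gh' qI qV hsq unfolding h'_def by auto
  have "\<forall>v\<in>?V. h' v = hs v" using MIN h'A h'le by blast
  moreover have "x p \<in> ?V" using xV p jk by simp
  ultimately show False using pI unfolding h'_def by force
qed



definition gs :: "'a set \<Rightarrow> ('a \<Rightarrow> 'a) \<Rightarrow> ('a \<Rightarrow> 'a) \<Rightarrow> ('a \<Rightarrow> nat) \<Rightarrow> bool" where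
  "gs X r i l \<longleftrightarrow> stc X r i \<and> vertices X r \<noteq> {} \<and> (\<forall>e\<in>half_edges X r. l (i e) = l e)"

lemma div_neg_dvd:
  fixes x d :: int
  assumes "d dvd x" shows "(- x) div d = - (x div d)"
proof (cases "d = 0")
  case False
  obtain k where k: "x = d * k" using assms by (auto elim!: dvdE)
  have "- x = d * (- k)" using k by simp
  hence "(- x) div d = (d * (- k)) div d" by (simp only:)
  also have "\<dots> = - k" by (rule nonzero_mult_div_cancel_left[OF False])
  finally have "(- x) div d = - k" .
  moreover have "x div d = k" using k False by simp
  ultimately show ?thesis by simp
qed simp

lemma lapl_sum0:
  assumes g: "gs X r i l" and pl: "g \<in> PL X r i l"
  shows "(\<Sum>v\<in>vertices X r. laplacian X r i l g v) = 0"
proof -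
  have st: "stc X r i" using g unfolding gs_def by auto
  have "(\<Sum>v\<in>vertices X r. laplacian X r i l g v) =
     (\<Sum>v\<in>vertices X r. \<Sum>e\<in>{e\<in>half_edges X r. r e = v}. (g (r e) - g (r (i e))) div int (l e))"
    unfolding laplacian_def by (intro sum.cong refl) auto
  also have "\<dots> = 0"
  proof (rule pair_sum[OF st], intro ballI)
    fix e assume e: "e \<in> half_edges X r"
    have d: "int (l e) dvd (g (r e) - g (r (i e)))" using pl e unfolding PL_def by auto
    have "(g (r (i e)) - g (r (i (i e)))) div int (l (i e)) = (- (g (r e) - g (r (i e)))) div int (l e)"
      using stcD(2)[OF st e] g e unfolding gs_def by simp
    also have "\<dots> = - ((g (r e) - g (r (i e))) div int (l e))" by (rule div_neg_dvd[OF d])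
    finally show "(g (r (i e)) - g (r (i (i e)))) div int (l (i e)) = - ((g (r e) - g (r (i e))) div int (l e))" .
  qed
  finally show ?thesis .
qed

lemma deg_equiv:
  assumes g: "gs X r i l" and eq: "lin_equiv X r i l D1 D2"
  shows "deg X r D1 = deg X r D2"
proof -
  obtain f where f: "f \<in> PL X r i l" "(\<lambda>x. D1 x - D2 x) = laplacian X r i l f"
    using eq unfolding lin_equiv_def by auto
  have "deg X r D1 - deg X r D2 = (\<Sum>v\<in>vertices X r. D1 v - D2 v)"
    unfolding deg_def sum_subtractf ..
  also have "\<dots> = (\<Sum>v\<in>vertices X r. laplacian X r i l f v)" using f(2) by (metis (no_types))
  also have "\<dots> = 0" by (rule lapl_sum0[OF g f(1)])
  finally show ?thesis by simp
qed

lemma deg_nonneg: "effective E \<Longrightarrow> 0 \<le> deg X r E"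
  unfolding deg_def effective_def by (simp add: sum_nonneg)

lemma deg_diff: "deg X r (\<lambda>x. D x - F x) = deg X r D - deg X r F"
  unfolding deg_def sum_subtractf ..

lemma linsys_deg:
  assumes g: "gs X r i l" and E: "E \<in> linsys X r i l D"
  shows "0 \<le> deg X r D"
  using deg_equiv[OF g, of E D] deg_nonneg[of E X r] E unfolding linsys_def by auto

lemma deg_point:
  assumes g: "gs X r i l" and v: "v \<in> vertices X r"
  shows "deg X r (\<lambda>x. if x = v then c else 0) = c"
proof -
  have "stc X r i" using g unfolding gs_def by auto
  hence "finite (vertices X r)" by (rule stc_fin(2))
  thus ?thesis unfolding deg_def using v by simp
qed

definition Sk :: "'a set \<Rightarrow> ('a \<Rightarrow> 'a) \<Rightarrow> ('a \<Rightarrow> 'a) \<Rightarrow> ('a \<Rightarrow> nat) \<Rightarrow> ('a \<Rightarrow> int) \<Rightarrow> int \<Rightarrow> bool" where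
  "Sk X r i l D = (\<lambda>k. \<forall>F \<in> divisors X r. effective F \<and> deg X r F = k \<longrightarrow>
      linsys X r i l (\<lambda>x. D x - F x) \<noteq> {})"

lemma rank_Sk: "rank X r i l D = Greatest (Sk X r i l D)"
  unfolding rank_def Sk_def ..

lemma int_greatest:
  fixes P :: "int \<Rightarrow> bool"
  assumes k0: "P k0" and B: "\<forall>k. P k \<longrightarrow> k \<le> B"
  shows "P (Greatest P) \<and> (\<forall>k. P k \<longrightarrow> k \<le> Greatest P)"
proof -
  let ?T = "{k. k0 \<le> k \<and> k \<le> B \<and> P k}"
  have fT: "finite ?T" by (rule finite_subset[of _ "{k0..B}"]) auto
  have ne: "?T \<noteq> {}" using k0 B by auto
  define M where "M = Max ?T"
  have M: "M \<in> ?T" unfolding M_def using Max_in[OF fT ne] .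
  have ge: "\<And>k. P k \<Longrightarrow> k \<le> M"
  proof -
    fix k assume Pk: "P k"
    show "k \<le> M"
    proof (cases "k0 \<le> k")
      case True thus ?thesis using Pk B fT unfolding M_def by (intro Max_ge) auto
    next
      case False thus ?thesis using M by auto
    qed
  qed
  have "Greatest P = M" by (rule Greatest_equality) (use M ge in auto)
  thus ?thesis using M ge by auto
qed

lemma int_least:
  fixes P :: "int \<Rightarrow> bool"
  assumes k0: "P k0" and B: "\<forall>k. P k \<longrightarrow> B \<le> k"
  shows "P (Least P) \<and> (\<forall>k. P k \<longrightarrow> Least P \<le> k)"
proof -
  let ?T = "{k. B \<le> k \<and> k \<le> k0 \<and> P k}"
  have fT: "finite ?T" by (rule finite_subset[of _ "{B..k0}"]) auto
  have ne: "?T \<noteq> {}" using k0 B by auto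
  define M where "M = Min ?T"
  have M: "M \<in> ?T" unfolding M_def using Min_in[OF fT ne] .
  have ge: "\<And>k. P k \<Longrightarrow> M \<le> k"
  proof -
    fix k assume Pk: "P k"
    show "M \<le> k"
    proof (cases "k \<le> k0")
      case True thus ?thesis using Pk B fT unfolding M_def by (intro Min_le) auto
    next
      case False thus ?thesis using M by auto
    qed
  qed
  have "Least P = M" by (rule Least_equality) (use M ge in auto)
  thus ?thesis using M ge by auto
qed

lemma Sk_bound:
  assumes g: "gs X r i l" and Sk: "Sk X r i l D k"
  shows "k \<le> max 0 (deg X r D)"
proof (cases "k \<le> 0")
  case True thus ?thesis by simp
next
  case False
  obtain v0 where v0: "v0 \<in> vertices X r" using g unfolding gs_def by auto
  define F where "F = (\<lambda>x. if x = v0 then k else (0::int))"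
  have "F \<in> divisors X r" unfolding F_def divisors_def using v0 by auto
  moreover have "effective F" unfolding F_def effective_def using False by auto
  moreover have "deg X r F = k" unfolding F_def by (rule deg_point[OF g v0])
  ultimately obtain E where "E \<in> linsys X r i l (\<lambda>x. D x - F x)" using Sk unfolding Sk_def by blast
  hence "0 \<le> deg X r (\<lambda>x. D x - F x)" by (rule linsys_deg[OF g])
  thus ?thesis unfolding deg_diff \<open>deg X r F = k\<close> by simp
qed

lemma Sk_neg: "Sk X r i l D (-1)"
  unfolding Sk_def by (auto dest!: deg_nonneg[where X=X and r=r])

lemma rank_props:
  assumes g: "gs X r i l"
  shows "Sk X r i l D (rank X r i l D) \<and> (\<forall>k. Sk X r i l D k \<longrightarrow> k \<le> rank X r i l D)"
  unfolding rank_Sk by (rule int_greatest[of "Sk X r i l D" "-1", OF Sk_neg]) (use Sk_bound[OF g] in blast)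

lemma F_unit:
  assumes g: "gs X r i l" and F: "F \<in> divisors X r" "effective F" "deg X r F = 1"
  shows "\<exists>v\<in>vertices X r. F = (\<lambda>x. if x = v then 1 else 0)"
proof -
  let ?V = "vertices X r"
  have "stc X r i" using g unfolding gs_def by auto
  hence fV: "finite ?V" by (rule stc_fin(2))
  have nn: "\<And>x. 0 \<le> F x" using F(2) unfolding effective_def by auto
  have "\<exists>v\<in>?V. 1 \<le> F v"
  proof (rule ccontr)
    assume "\<not> ?thesis"
    hence "\<forall>v\<in>?V. F v = 0" using nn by (metis linorder_not_le order_antisym zero_less_iff_neq_zero int_one_le_iff_zero_less)
    hence "deg X r F = 0" unfolding deg_def by simp
    thus False using F(3) by simp
  qed
  then obtain v where v: "v \<in> ?V" "1 \<le> F v" by blast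
  have s: "deg X r F = F v + sum F (?V - {v})" unfolding deg_def using sum.remove[OF fV v(1)] .
  have s0: "0 \<le> sum F (?V - {v})" using nn by (simp add: sum_nonneg)
  have Fv: "F v = 1" using s s0 F(3) v(2) by simp
  have "sum F (?V - {v}) = 0" using s Fv F(3) by simp
  hence z: "\<forall>w\<in>?V - {v}. F w = 0" using sum_nonneg_eq_0_iff[of "?V - {v}" F] fV nn by auto
  have "F = (\<lambda>x. if x = v then 1 else 0)"
  proof
    fix x show "F x = (if x = v then 1 else 0)"
      using Fv z F(1) unfolding divisors_def by (cases "x \<in> ?V") auto
  qed
  thus ?thesis using v by blast
qed

lemma rank_ge1_iff:
  assumes g: "gs X r i l" and D: "D \<in> divisors X r"
  shows "1 \<le> rank X r i l D \<longleftrightarrow>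
    (\<forall>v\<in>vertices X r. linsys X r i l (\<lambda>x. D x - (if x = v then 1 else 0)) \<noteq> {})"
proof
  assume R: "1 \<le> rank X r i l D"
  let ?R = "rank X r i l D"
  have SR: "Sk X r i l D ?R" using rank_props[OF g] by blast
  show "\<forall>v\<in>vertices X r. linsys X r i l (\<lambda>x. D x - (if x = v then 1 else 0)) \<noteq> {}"
  proof
    fix v assume v: "v \<in> vertices X r"
    define F where "F = (\<lambda>x. if x = v then ?R else (0::int))"
    have "F \<in> divisors X r" unfolding F_def divisors_def using v by auto
    moreover have "effective F" unfolding F_def effective_def using R by auto
    moreover have "deg X r F = ?R" unfolding F_def by (rule deg_point[OF g v])
    ultimately obtain E where E: "E \<in> linsys X r i l (\<lambda>x. D x - F x)" using SR unfolding Sk_def by blast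
    define E' where "E' = (\<lambda>x. E x + (if x = v then ?R - 1 else 0))"
    have "E' \<in> linsys X r i l (\<lambda>x. D x - (if x = v then 1 else 0))"
      unfolding linsys_def
    proof (intro CollectI conjI)
      show "E' \<in> divisors X r" using E v unfolding E'_def linsys_def divisors_def by auto
      show "effective E'" using E R unfolding E'_def linsys_def effective_def by auto
      have eq: "(\<lambda>x. E' x - (D x - (if x = v then 1 else 0))) = (\<lambda>x. E x - (D x - F x))"
        unfolding E'_def F_def by auto
      show "lin_equiv X r i l E' (\<lambda>x. D x - (if x = v then 1 else 0))"
        using E unfolding linsys_def lin_equiv_def eq by auto
    qed
    thus "linsys X r i l (\<lambda>x. D x - (if x = v then 1 else 0)) \<noteq> {}" by blast
  qed
next
  assume H: "\<forall>v\<in>vertices X r. linsys X r i l (\<lambda>x. D x - (if x = v then 1 else 0)) \<noteq> {}"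
  have "Sk X r i l D 1" unfolding Sk_def
  proof (intro ballI impI)
    fix F assume "F \<in> divisors X r" "effective F \<and> deg X r F = 1"
    then obtain v where "v \<in> vertices X r" "F = (\<lambda>x. if x = v then 1 else 0)" using F_unit[OF g] by blast
    thus "linsys X r i l (\<lambda>x. D x - F x) \<noteq> {}" using H by auto
  qed
  thus "1 \<le> rank X r i l D" using rank_props[OF g] by blast
qed

lemma lin_equiv_refl: "lin_equiv X r i l D D"
  unfolding lin_equiv_def PL_def
proof (rule bexI[where x="\<lambda>_. 0"])
  show "(\<lambda>x. D x - D x) = laplacian X r i l (\<lambda>_. 0)" unfolding laplacian_def by auto
qed auto

lemma dgon_props:
  assumes g: "gs X r i l"
  shows "(\<exists>D\<in>divisors X r. 1 \<le> rank X r i l D \<and> deg X r D = dgon X r i l) \<and>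
         (\<forall>D\<in>divisors X r. 1 \<le> rank X r i l D \<longrightarrow> dgon X r i l \<le> deg X r D)"
proof -
  let ?V = "vertices X r"
  let ?P = "\<lambda>d::int. \<exists>D\<in>divisors X r. rank X r i l D \<ge> 1 \<and> deg X r D = d"
  have dg: "dgon X r i l = Least ?P" unfolding dgon_def ..
  define D0 where "D0 = (\<lambda>x. if x \<in> ?V then (1::int) else 0)"
  have D0d: "D0 \<in> divisors X r" unfolding D0_def divisors_def by auto
  have "1 \<le> rank X r i l D0"
  proof (subst rank_ge1_iff[OF g D0d], intro ballI)
    fix v assume v: "v \<in> ?V"
    let ?E = "\<lambda>x. D0 x - (if x = v then 1 else 0)"
    have "?E \<in> linsys X r i l ?E"
      unfolding linsys_def using v lin_equiv_refl
      unfolding D0_def divisors_def effective_def by auto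
    thus "linsys X r i l ?E \<noteq> {}" by blast
  qed
  hence P0: "?P (deg X r D0)" using D0d by auto
  have B: "\<forall>d. ?P d \<longrightarrow> 1 \<le> d"
  proof (intro allI impI)
    fix d assume "?P d"
    then obtain D where D: "D \<in> divisors X r" "1 \<le> rank X r i l D" "deg X r D = d" by auto
    obtain v0 where v0: "v0 \<in> ?V" using g unfolding gs_def by auto
    have "linsys X r i l (\<lambda>x. D x - (if x = v0 then 1 else 0)) \<noteq> {}"
      using D(2) rank_ge1_iff[OF g D(1)] v0 by blast
    then obtain E where "E \<in> linsys X r i l (\<lambda>x. D x - (if x = v0 then 1 else 0))" by blast
    hence "0 \<le> deg X r (\<lambda>x. D x - (if x = v0 then 1 else 0))" by (rule linsys_deg[OF g])
    thus "1 \<le> d" unfolding deg_diff deg_point[OF g v0] D(3) by simp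
  qed
  from int_least[OF P0 B] show ?thesis unfolding dg by auto
qed



definition liftD :: "('a \<Rightarrow> int) \<Rightarrow> 'a snode \<Rightarrow> int" where
  "liftD D y = (case y of SV v \<Rightarrow> D v | _ \<Rightarrow> 0)"

definition gH :: "('a \<Rightarrow> 'a) \<Rightarrow> ('a \<Rightarrow> 'a) \<Rightarrow> ('a \<Rightarrow> nat) \<Rightarrow> ('a \<Rightarrow> int) \<Rightarrow> 'a snode \<Rightarrow> int" where
  "gH r i l g y = (case y of SV v \<Rightarrow> g v
      | SM c m \<Rightarrow> g (r c) + int m * ((g (r (i c)) - g (r c)) div int (l c)) | SE _ _ \<Rightarrow> 0)"

lemma edge_rep_in: "edge_rep i e \<in> {e, i e}"
  unfolding edge_rep_def by (rule someI[of _ e]) simp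

lemma edge_rep_i: "i (i e) = e \<Longrightarrow> edge_rep i (i e) = edge_rep i e"
  unfolding edge_rep_def by (simp add: insert_commute)

locale subdiv =
  fixes X :: "'a set" and r i :: "'a \<Rightarrow> 'a" and l :: "'a \<Rightarrow> nat"
  assumes gsG: "gs X r i l" and lpos: "\<forall>e\<in>half_edges X r. 1 \<le> l e"
    and ine: "\<forall>e\<in>half_edges X r. i e \<noteq> e"
begin

abbreviation "V \<equiv> vertices X r"
abbreviation "HE \<equiv> half_edges X r"
abbreviation "XH \<equiv> subd_X X r i l"
abbreviation "rH \<equiv> subd_r r i l"
abbreviation "iH \<equiv> subd_i i l"
abbreviation "sn \<equiv> sub_node r i l"
abbreviation "VH \<equiv> vertices XH rH"
abbreviation "HEH \<equiv> half_edges XH rH"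

lemma st: "stc X r i" using gsG unfolding gs_def by auto
lemma li: "e \<in> HE \<Longrightarrow> l (i e) = l e" using gsG unfolding gs_def by auto
lemma lp: "e \<in> HE \<Longrightarrow> 1 \<le> l e" using lpos by auto
lemma ie: "e \<in> HE \<Longrightarrow> i e \<noteq> e" using ine by auto

lemma rep_other: "e \<in> HE \<Longrightarrow> edge_rep i e \<noteq> e \<Longrightarrow> edge_rep i e = i e"
  using edge_rep_in[of i e] by auto

lemma sn_sym:
  assumes e: "e \<in> HE" and m: "m \<le> l e"
  shows "sn (i e) (l e - m) = sn e m"
proof -
  have ii: "i (i e) = e" using stcD(2)[OF st e] .
  have lie: "l (i e) = l e" using li[OF e] .
  have l1: "1 \<le> l e" using lp[OF e] .
  have rr: "edge_rep i (i e) = edge_rep i e" using edge_rep_i[of i e, OF ii] .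
  show ?thesis
  proof (cases "m = 0")
    case True thus ?thesis unfolding sub_node_def using lie ii l1 by auto
  next
    case m0: False
    show ?thesis
    proof (cases "m = l e")
      case True thus ?thesis unfolding sub_node_def using lie ii l1 m0 by auto
    next
      case False
      have a: "l e - m \<noteq> 0" "l e - m \<noteq> l (i e)" using m m0 False lie by auto
      show ?thesis
      proof (cases "edge_rep i e = e")
        case True
        hence "edge_rep i (i e) \<noteq> i e" using rr ie[OF e] by auto
        thus ?thesis unfolding sub_node_def using a m0 False True ii lie m by auto
      next
        case F2: False
        hence "edge_rep i e = i e" by (rule rep_other[OF e])
        hence "edge_rep i (i e) = i e" using rr by simp
        thus ?thesis unfolding sub_node_def using a m0 False F2 ii lie m by auto
      qed
    qed
  qed
qed

definition SMset where "SMset = {SM c j |c j. c \<in> HE \<and> edge_rep i c = c \<and> 1 \<le> j \<and> j < l c}"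

lemma sn_cases:
  assumes e: "e \<in> HE" and m: "m \<le> l e"
  shows "sn e m \<in> SV ` V \<union> SMset"
proof -
  have l1: "1 \<le> l e" using lp[OF e] .
  show ?thesis
  proof (cases "m = 0 \<or> m = l e")
    case True thus ?thesis unfolding sub_node_def using stcD(3,4)[OF st e] by auto
  next
    case False
    show ?thesis
    proof (cases "edge_rep i e = e")
      case True thus ?thesis unfolding sub_node_def SMset_def using False e m by auto
    next
      case F2: False
      hence re: "edge_rep i e = i e" by (rule rep_other[OF e])
      have ii: "i (i e) = e" using stcD(2)[OF st e] .
      have "edge_rep i (i e) = i e" using edge_rep_i[of i e, OF ii] re by simp
      moreover have "i e \<in> HE" using stcD(1)[OF st e] .
      ultimately have "SM (i e) (l e - m) \<in> SMset" unfolding SMset_def using False m li[OF e] by auto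
      thus ?thesis unfolding sub_node_def using False F2 by auto
    qed
  qed
qed

lemma sn_not_SE: "sn e m \<noteq> SE a b"
  unfolding sub_node_def by auto

lemma subd_r_sn: "rH (sn e m) = sn e m"
  unfolding sub_node_def by auto

lemma XH_eq: "XH = SV ` V \<union> SMset \<union> {SE e j |e j. e \<in> HE \<and> j < l e}"
  unfolding subd_X_def SMset_def ..

lemma VH_eq: "VH = SV ` V \<union> SMset"
proof -
  have "VH = {x \<in> XH. rH x = x}" unfolding vertices_def ..
  also have "\<dots> = SV ` V \<union> SMset"
  proof
    show "{x \<in> XH. rH x = x} \<subseteq> SV ` V \<union> SMset"
      unfolding XH_eq using sn_not_SE by auto
    show "SV ` V \<union> SMset \<subseteq> {x \<in> XH. rH x = x}"
      unfolding XH_eq SMset_def by auto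
  qed
  finally show ?thesis .
qed

lemma HEH_eq: "HEH = {SE e j |e j. e \<in> HE \<and> j < l e}"
proof -
  have "HEH = {x \<in> XH. rH x \<noteq> x}" unfolding half_edges_def ..
  also have "\<dots> = {SE e j |e j. e \<in> HE \<and> j < l e}"
  proof
    show "{x \<in> XH. rH x \<noteq> x} \<subseteq> {SE e j |e j. e \<in> HE \<and> j < l e}"
      unfolding XH_eq SMset_def by auto
    show "{SE e j |e j. e \<in> HE \<and> j < l e} \<subseteq> {x \<in> XH. rH x \<noteq> x}"
      unfolding XH_eq using sn_not_SE by fastforce
  qed
  finally show ?thesis .
qed

lemma sn_V: "e \<in> HE \<Longrightarrow> m \<le> l e \<Longrightarrow> sn e m \<in> VH"
  using sn_cases VH_eq by auto

lemma rHiH: "e \<in> HE \<Longrightarrow> j < l e \<Longrightarrow> rH (iH (SE e j)) = sn e (j + 1)"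
  using sn_sym[of e "j + 1"] li by (simp add: diff_diff_left)

lemma finXH: "finite XH"
proof -
  have fV: "finite V" and fH: "finite HE" using stc_fin[OF st] by auto
  have "SMset \<subseteq> (\<lambda>(c, j). SM c j) ` (SIGMA c:HE. {..<l c})" unfolding SMset_def by auto
  moreover have "finite ((\<lambda>(c, j). SM c j) ` (SIGMA c:HE. {..<l c}))" using fH by auto
  ultimately have f1: "finite SMset" by (rule finite_subset)
  have "{SE e j |e j. e \<in> HE \<and> j < l e} \<subseteq> (\<lambda>(c, j). SE c j) ` (SIGMA c:HE. {..<l c})" by auto
  moreover have "finite ((\<lambda>(c, j). SE c j) ` (SIGMA c:HE. {..<l c}))" using fH by auto
  ultimately have f2: "finite {SE e j |e j. e \<in> HE \<and> j < l e}" by (rule finite_subset)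
  show ?thesis unfolding XH_eq using f1 f2 fV by auto
qed

lemma stcH: "stc XH rH iH"
  unfolding stc_def
proof (intro conjI finXH ballI)
  fix x assume "x \<in> HEH"
  then obtain e j where x: "x = SE e j" "e \<in> HE" "j < l e" unfolding HEH_eq by auto
  have l1: "1 \<le> l e" using lp[OF x(2)] .
  have "i e \<in> HE" using stcD(1)[OF st x(2)] .
  moreover have "l e - 1 - j < l (i e)" using li[OF x(2)] l1 x(3) by simp
  ultimately show "iH x \<in> HEH" unfolding HEH_eq x by auto
  show "iH (iH x) = x" using x stcD(2)[OF st x(2)] li[OF x(2)] by auto
  show "rH x \<in> VH" using x sn_V by auto
qed

lemma gsH: "gs XH rH iH unit_len"
  unfolding gs_def
proof (intro conjI stcH ballI)
  have "V \<noteq> {}" using gsG unfolding gs_def by auto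
  thus "VH \<noteq> {}" unfolding VH_eq by auto
  fix x assume "x \<in> HEH"
  then obtain e j where x: "x = SE e j" unfolding HEH_eq by auto
  show "unit_len (iH x) = unit_len x" unfolding x by simp
qed

lemma laplacianH: "laplacian XH rH iH unit_len g y = (if y \<in> VH then lap XH rH iH g y else 0)"
proof -
  have "\<And>e. e \<in> HEH \<Longrightarrow> unit_len e = 1" unfolding HEH_eq by auto
  thus ?thesis unfolding laplacian_def lap_def by (auto intro!: sum.cong)
qed

lemma PLH: "g \<in> PL XH rH iH unit_len"
proof -
  have "\<And>e. e \<in> HEH \<Longrightarrow> unit_len e = 1" unfolding HEH_eq by auto
  thus ?thesis unfolding PL_def by auto
qed

lemma halfSV:
  assumes v: "v \<in> V"
  shows "{x\<in>HEH. rH x = SV v} = (\<lambda>e. SE e 0) ` {e\<in>HE. r e = v}"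
proof
  show "{x\<in>HEH. rH x = SV v} \<subseteq> (\<lambda>e. SE e 0) ` {e\<in>HE. r e = v}"
  proof
    fix x assume "x \<in> {x\<in>HEH. rH x = SV v}"
    then obtain e j where x: "x = SE e j" "e \<in> HE" "j < l e" "sn e j = SV v" unfolding HEH_eq by auto
    have "j = 0" using x(3,4) unfolding sub_node_def by (auto split: if_splits)
    hence "r e = v" using x(4) unfolding sub_node_def by auto
    thus "x \<in> (\<lambda>e. SE e 0) ` {e\<in>HE. r e = v}" using x \<open>j = 0\<close> by auto
  qed
  show "(\<lambda>e. SE e 0) ` {e\<in>HE. r e = v} \<subseteq> {x\<in>HEH. rH x = SV v}"
    unfolding HEH_eq using lp by (force simp: sub_node_def)
qed

lemma halfSM:
  assumes c: "c \<in> HE" "edge_rep i c = c" and m: "1 \<le> m" "m < l c"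
  shows "{x\<in>HEH. rH x = SM c m} = {SE (i c) (l c - m), SE c m}"
proof
  have ii: "i (i c) = c" using stcD(2)[OF st c(1)] .
  show "{x\<in>HEH. rH x = SM c m} \<subseteq> {SE (i c) (l c - m), SE c m}"
  proof
    fix x assume "x \<in> {x\<in>HEH. rH x = SM c m}"
    then obtain e j where x: "x = SE e j" "e \<in> HE" "j < l e" "sn e j = SM c m" unfolding HEH_eq by auto
    show "x \<in> {SE (i c) (l c - m), SE c m}"
    proof (cases "edge_rep i e = e")
      case True
      hence "e = c \<and> j = m" using x(4) unfolding sub_node_def by (auto split: if_splits)
      thus ?thesis using x by auto
    next
      case False
      hence "i e = c \<and> l e - j = m" using x(4) unfolding sub_node_def by (auto split: if_splits)
      moreover have "i (i e) = e" using stcD(2)[OF st x(2)] .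
      ultimately have "e = i c" "j = l c - m" using li[OF x(2)] x(3) by auto
      thus ?thesis using x by auto
    qed
  qed
  show "{SE (i c) (l c - m), SE c m} \<subseteq> {x\<in>HEH. rH x = SM c m}"
  proof -
    have ic: "i c \<in> HE" using stcD(1)[OF st c(1)] .
    have s1: "sn c m = SM c m" unfolding sub_node_def using c m by auto
    have "sn (i c) (l c - m) = SM c m" using sn_sym[OF c(1), of m] m s1 by simp
    moreover have "l c - m < l (i c)" using li[OF c(1)] m by simp
    ultimately show ?thesis unfolding HEH_eq using c ic m s1 by auto
  qed
qed

end



context subdiv
begin

lemma gH_sub:
  assumes g: "g \<in> PL X r i l" and e: "e \<in> HE" and m: "m \<le> l e"
  shows "gH r i l g (sn e m) = g (r e) + int m * ((g (r (i e)) - g (r e)) div int (l e))"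
proof -
  define s where "s = (g (r (i e)) - g (r e)) div int (l e)"
  have d0: "int (l e) dvd (g (r e) - g (r (i e)))" using g e unfolding PL_def by auto
  hence d: "int (l e) dvd (g (r (i e)) - g (r e))" by (metis dvd_diff_commute)
  hence ds: "g (r (i e)) - g (r e) = int (l e) * s" unfolding s_def by simp
  have ii: "i (i e) = e" using stcD(2)[OF st e] .
  have l1: "1 \<le> l e" using lp[OF e] .
  have neg: "(g (r e) - g (r (i e))) div int (l e) = - s"
    unfolding s_def using div_neg_dvd[OF d] by simp
  have "gH r i l g (sn e m) = g (r e) + int m * s"
  proof (cases "m = 0")
    case True thus ?thesis unfolding sub_node_def gH_def by simp
  next
    case m0: False
    show ?thesis
    proof (cases "m = l e")
      case True thus ?thesis unfolding sub_node_def gH_def using m0 ds by simp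
    next
      case False
      show ?thesis
      proof (cases "edge_rep i e = e")
        case True thus ?thesis unfolding sub_node_def gH_def s_def using m0 False by simp
      next
        case F2: False
        have "gH r i l g (sn e m) = g (r (i e)) + int (l e - m) * ((g (r (i (i e))) - g (r (i e))) div int (l (i e)))"
          unfolding sub_node_def gH_def using m0 False F2 by simp
        also have "\<dots> = g (r (i e)) - int (l e - m) * s" using ii li[OF e] neg by simp
        also have "\<dots> = g (r e) + int m * s" using ds m by (simp add: of_nat_diff algebra_simps)
        finally show ?thesis .
      qed
    qed
  qed
  thus ?thesis unfolding s_def .
qed

lemma lift_lap:
  assumes g: "g \<in> PL X r i l" and y: "y \<in> VH"
  shows "lap XH rH iH (gH r i l g) y = liftD (laplacian X r i l g) y"
proof -
  have y': "y \<in> SV ` V \<or> y \<in> SMset" using y VH_eq by auto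
  show ?thesis
  proof (cases "y \<in> SV ` V")
    case True
    then obtain v where v: "v \<in> V" "y = SV v" by auto
    let ?S = "{e\<in>HE. r e = v}"
    define s where "s e = (g (r (i e)) - g (r e)) div int (l e)" for e
    have inj: "inj_on (\<lambda>e. SE e 0) ?S" by (auto intro: inj_onI)
    have "lap XH rH iH (gH r i l g) y = (\<Sum>x\<in>(\<lambda>e. SE e 0) ` ?S. gH r i l g (SV v) - gH r i l g (rH (iH x)))"
      unfolding lap_def v(2) halfSV[OF v(1)] ..
    also have "\<dots> = (\<Sum>e\<in>?S. gH r i l g (SV v) - gH r i l g (rH (iH (SE e 0))))"
      by (rule sum.reindex[OF inj, unfolded comp_def])
    also have "\<dots> = (\<Sum>e\<in>?S. - s e)"
    proof (rule sum.cong[OF refl])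
      fix e assume e: "e \<in> ?S"
      have "1 \<le> l e" using lp e by auto
      hence "rH (iH (SE e 0)) = sn e 1" using rHiH[of e 0] e by simp
      moreover have "gH r i l g (sn e 1) = g (r e) + s e" using gH_sub[OF g, of e 1] lp e unfolding s_def by auto
      ultimately show "gH r i l g (SV v) - gH r i l g (rH (iH (SE e 0))) = - s e"
        using e unfolding gH_def by simp
    qed
    also have "\<dots> = laplacian X r i l g v"
      unfolding laplacian_def using v(1)
    proof (simp, intro sum.cong refl)
      fix e assume e: "e \<in> {e\<in>HE. r e = v}"
      have d0: "int (l e) dvd (g (r e) - g (r (i e)))" using g e unfolding PL_def by auto
      hence d: "int (l e) dvd (g (r (i e)) - g (r e))" by (metis dvd_diff_commute)
      have "(g v - g (r (i e))) div int (l e) = (- (g (r (i e)) - g (r e))) div int (l e)" using e by simp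
      also have "\<dots> = - s e" unfolding s_def by (rule div_neg_dvd[OF d])
      finally show "- s e = (g v - g (r (i e))) div int (l e)" by simp
    qed
    finally show ?thesis unfolding liftD_def v(2) by simp
  next
    case False
    hence "y \<in> SMset" using y' by simp
    then obtain c m where cm: "y = SM c m" "c \<in> HE" "edge_rep i c = c" "1 \<le> m" "m < l c"
      unfolding SMset_def by auto
    define s where "s = (g (r (i c)) - g (r c)) div int (l c)"
    have ic: "i c \<in> HE" using stcD(1)[OF st cm(2)] .
    have neq: "SE (i c) (l c - m) \<noteq> SE c m" using ie[OF cm(2)] by simp
    have s1: "sn c m = SM c m" unfolding sub_node_def using cm by auto
    have r1: "rH (iH (SE c m)) = sn c (m + 1)" using rHiH[OF cm(2) cm(5)] .
    have r2: "rH (iH (SE (i c) (l c - m))) = sn c (m - 1)"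
    proof -
      have "rH (iH (SE (i c) (l c - m))) = sn (i c) (l c - m + 1)"
        using rHiH[OF ic, of "l c - m"] li[OF cm(2)] cm by simp
      also have "l c - m + 1 = l c - (m - 1)" using cm by simp
      also have "sn (i c) (l c - (m - 1)) = sn c (m - 1)" using sn_sym[OF cm(2), of "m - 1"] cm by simp
      finally show ?thesis .
    qed
    have v0: "gH r i l g (SM c m) = g (r c) + int m * s" using gH_sub[OF g cm(2), of m] cm s1 unfolding s_def by simp
    have v1: "gH r i l g (sn c (m + 1)) = g (r c) + int (m + 1) * s" using gH_sub[OF g cm(2), of "m + 1"] cm unfolding s_def by simp
    have v2: "gH r i l g (sn c (m - 1)) = g (r c) + int (m - 1) * s" using gH_sub[OF g cm(2), of "m - 1"] cm unfolding s_def by simp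
    have "lap XH rH iH (gH r i l g) y =
       (gH r i l g (SM c m) - gH r i l g (sn c (m - 1))) + (gH r i l g (SM c m) - gH r i l g (sn c (m + 1)))"
      unfolding lap_def cm(1) halfSM[OF cm(2-5)] using neq r1 r2 by simp
    also have "\<dots> = 0" unfolding v0 v1 v2 using cm(4) by (simp add: of_nat_diff algebra_simps)
    finally show ?thesis unfolding liftD_def cm(1) by simp
  qed
qed

lemma lift_out: "D \<in> divisors X r \<Longrightarrow> y \<notin> VH \<Longrightarrow> liftD D y = 0"
  unfolding liftD_def divisors_def VH_eq by (cases y) auto

lemma lift_equiv:
  assumes E: "lin_equiv X r i l D1 D2"
  shows "\<exists>g. \<forall>y\<in>VH. liftD D1 y - liftD D2 y = lap XH rH iH g y"
proof -
  obtain g where g: "g \<in> PL X r i l" "(\<lambda>x. D1 x - D2 x) = laplacian X r i l g"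
    using E unfolding lin_equiv_def by auto
  have "\<forall>y\<in>VH. liftD D1 y - liftD D2 y = lap XH rH iH (gH r i l g) y"
  proof
    fix y assume y: "y \<in> VH"
    have "liftD D1 y - liftD D2 y = liftD (\<lambda>x. D1 x - D2 x) y" unfolding liftD_def by (cases y) auto
    thus "liftD D1 y - liftD D2 y = lap XH rH iH (gH r i l g) y" using lift_lap[OF g(1) y] g(2) by simp
  qed
  thus ?thesis by blast
qed

lemma adjH_sym: "(y, z) \<in> adjacent XH rH iH \<Longrightarrow> (z, y) \<in> adjacent XH rH iH"
proof -
  assume "(y, z) \<in> adjacent XH rH iH"
  then obtain x where x: "x \<in> HEH" "y = rH x" "z = rH (iH x)" unfolding adjacent_def by auto
  have "iH x \<in> HEH" "iH (iH x) = x" using stcD[OF stcH x(1)] by auto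
  thus ?thesis unfolding adjacent_def using x by auto
qed

lemma sn_path:
  assumes e: "e \<in> HE"
  shows "m \<le> l e \<Longrightarrow> (SV (r e), sn e m) \<in> (adjacent XH rH iH)\<^sup>*"
proof (induction m)
  case 0 thus ?case unfolding sub_node_def by simp
next
  case (Suc m)
  hence ih: "(SV (r e), sn e m) \<in> (adjacent XH rH iH)\<^sup>*" by simp
  have "SE e m \<in> HEH" unfolding HEH_eq using e Suc by auto
  moreover have "rH (SE e m) = sn e m" by simp
  moreover have "rH (iH (SE e m)) = sn e (Suc m)" using rHiH[OF e, of m] Suc by simp
  ultimately have "(sn e m, sn e (Suc m)) \<in> adjacent XH rH iH" unfolding adjacent_def by force
  with ih show ?case by (rule rtrancl_into_rtrancl)
qed

lemma connH:
  assumes cn: "conn X r i"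
  shows "conn XH rH iH"
proof -
  let ?A = "adjacent XH rH iH"
  have symA: "sym (?A\<^sup>*)" by (rule sym_rtrancl) (auto intro: symI adjH_sym)
  have G: "(SV u, SV w) \<in> ?A\<^sup>*" if "(u, w) \<in> (adjacent X r i)\<^sup>*" for u w
    using that
  proof (induction rule: rtrancl_induct)
    case base thus ?case by simp
  next
    case (step y z)
    then obtain e where e: "e \<in> HE" "y = r e" "z = r (i e)" unfolding adjacent_def by auto
    have "sn e (l e) = SV (r (i e))" unfolding sub_node_def using lp[OF e(1)] by auto
    hence "(SV y, SV z) \<in> ?A\<^sup>*" using sn_path[OF e(1), of "l e"] e by simp
    with step.IH show ?case by (rule rtrancl_trans)
  qed
  have toV: "\<exists>u\<in>V. (SV u, y) \<in> ?A\<^sup>*" if y: "y \<in> VH" for y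
  proof -
    have "y \<in> SV ` V \<or> y \<in> SMset" using y VH_eq by auto
    thus ?thesis
    proof
      assume "y \<in> SV ` V" thus ?thesis by auto
    next
      assume "y \<in> SMset"
      then obtain c m where cm: "y = SM c m" "c \<in> HE" "edge_rep i c = c" "1 \<le> m" "m < l c"
        unfolding SMset_def by auto
      have "sn c m = SM c m" unfolding sub_node_def using cm by auto
      hence "(SV (r c), y) \<in> ?A\<^sup>*" using sn_path[OF cm(2), of m] cm by simp
      thus ?thesis using stcD(3)[OF st cm(2)] by blast
    qed
  qed
  show ?thesis unfolding conn_def
  proof (intro ballI)
    fix y z assume y: "y \<in> VH" and z: "z \<in> VH"
    obtain u where u: "u \<in> V" "(SV u, y) \<in> ?A\<^sup>*" using toV[OF y] by blast
    obtain w where w: "w \<in> V" "(SV w, z) \<in> ?A\<^sup>*" using toV[OF z] by blast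
    have "(y, SV u) \<in> ?A\<^sup>*" using symA u(2) by (auto dest: symD)
    moreover have "(SV u, SV w) \<in> ?A\<^sup>*" using G cn u(1) w(1) unfolding conn_def by blast
    ultimately show "(y, z) \<in> ?A\<^sup>*" using w(2) by (meson rtrancl_trans)
  qed
qed

end



context subdiv
begin

lemma rHiH_back:
  assumes c: "c \<in> HE" and n: "1 \<le> n" "n \<le> l c"
  shows "rH (iH (SE (i c) (l c - n))) = sn c (n - 1)"
proof -
  have ic: "i c \<in> HE" using stcD(1)[OF st c] .
  have "rH (iH (SE (i c) (l c - n))) = sn (i c) (l c - n + 1)"
    using rHiH[OF ic, of "l c - n"] li[OF c] n by simp
  also have "l c - n + 1 = l c - (n - 1)" using n by simp
  also have "sn (i c) (l c - (n - 1)) = sn c (n - 1)" using sn_sym[OF c, of "n - 1"] n by simp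
  finally show ?thesis .
qed

lemma pathc_sub:
  assumes c: "c \<in> HE" "edge_rep i c = c" and nl: "\<forall>e\<in>HE. r e \<noteq> r (i e)"
  shows "pathc XH rH iH (liftD E) (sn c) (l c) (\<lambda>n. SE (i c) (l c - n)) (\<lambda>n. SE c n)"
  unfolding pathc_def
proof (intro conjI allI impI)
  fix n assume "n \<le> l c" thus "sn c n \<in> VH" using sn_V[OF c(1)] by simp
next
  fix n assume n: "0 < n \<and> n < l c"
  have s: "sn c n = SM c n" unfolding sub_node_def using c n by auto
  show "liftD E (sn c n) = 0" unfolding s liftD_def by simp
  show "{e\<in>HEH. rH e = sn c n} = {SE (i c) (l c - n), SE c n}" unfolding s using halfSM[OF c, of n] n by simp
  show "SE (i c) (l c - n) \<noteq> SE c n" using ie[OF c(1)] by simp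
  show "rH (iH (SE (i c) (l c - n))) = sn c (n - 1)" using rHiH_back[OF c(1), of n] n by simp
  show "rH (iH (SE c n)) = sn c (n + 1)" using rHiH[OF c(1), of n] n by simp
qed

lemma inj_sub:
  assumes c: "c \<in> HE" "edge_rep i c = c" and nl: "\<forall>e\<in>HE. r e \<noteq> r (i e)"
  shows "inj_on (sn c) {..l c}"
proof (rule inj_onI)
  fix n1 n2 assume n: "n1 \<in> {..l c}" "n2 \<in> {..l c}" "sn c n1 = sn c n2"
  have "r c \<noteq> r (i c)" using nl c by auto
  thus "n1 = n2" using n c lp[OF c(1)] unfolding sub_node_def by (auto split: if_splits)
qed

lemma deg_lift:
  assumes D: "D \<in> divisors X r"
  shows "deg XH rH (liftD D) = deg X r D"
proof -
  have fVH: "finite VH" using stc_fin(2)[OF stcH] .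
  have "deg XH rH (liftD D) = sum (liftD D) (SV ` V)"
    unfolding deg_def
    by (rule sum.mono_neutral_right[OF fVH]) (auto simp: VH_eq SMset_def liftD_def)
  also have "\<dots> = sum (liftD D \<circ> SV) V" by (rule sum.reindex) (auto intro: inj_onI)
  also have "\<dots> = deg X r D" unfolding deg_def liftD_def by simp
  finally show ?thesis .
qed

lemma main_sub:
  assumes nl: "\<forall>e\<in>HE. r e \<noteq> r (i e)" and cn: "conn X r i"
    and D: "D \<in> divisors X r" and R: "1 \<le> rank X r i l D"
  shows "1 \<le> rank XH rH iH unit_len (liftD D)"
proof -
  have cnH: "conn XH rH iH" by (rule connH[OF cn])
  have Rv: "\<forall>v\<in>V. linsys X r i l (\<lambda>x. D x - (if x = v then 1 else 0)) \<noteq> {}"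
    using rank_ge1_iff[OF gsG D] R by blast
  have shift: "E' \<in> linsys X r i l (\<lambda>x. D x - (if x = v then 1 else 0)) \<Longrightarrow> v \<in> V \<Longrightarrow>
     (\<lambda>x. E' x + (if x = v then 1 else 0)) \<in> divisors X r \<and> effective (\<lambda>x. E' x + (if x = v then 1 else 0))
     \<and> lin_equiv X r i l (\<lambda>x. E' x + (if x = v then 1 else 0)) D" for E' v
  proof -
    assume E': "E' \<in> linsys X r i l (\<lambda>x. D x - (if x = v then 1 else 0))" and v: "v \<in> V"
    have eq: "(\<lambda>x. (E' x + (if x = v then 1 else 0)) - D x) = (\<lambda>x. E' x - (D x - (if x = v then 1 else 0)))"
      by auto
    show ?thesis using E' v unfolding linsys_def lin_equiv_def divisors_def effective_def eq
      by (auto simp: add_nonneg_nonneg)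
  qed
  obtain v0 where v0: "v0 \<in> V" using gsG unfolding gs_def by auto
  obtain E0' where E0': "E0' \<in> linsys X r i l (\<lambda>x. D x - (if x = v0 then 1 else 0))" using Rv v0 by blast
  define E0 where "E0 = (\<lambda>x. E0' x + (if x = v0 then 1 else 0))"
  have E0: "E0 \<in> divisors X r" "effective E0" "lin_equiv X r i l E0 D" using shift[OF E0' v0] unfolding E0_def by auto
  define D0 where "D0 = liftD E0"
  have D0nn: "\<forall>z\<in>VH. 0 \<le> D0 z" using E0(2) unfolding D0_def liftD_def effective_def by (auto split: snode.split)
  obtain g0 where g0: "\<forall>y\<in>VH. liftD E0 y - liftD D y = lap XH rH iH g0 y" using lift_equiv[OF E0(3)] by blast
  have pot: "\<exists>h. \<forall>z\<in>VH. liftD E z = D0 z + lap XH rH iH h z" if E: "lin_equiv X r i l E D" for E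
  proof -
    obtain g1 where g1: "\<forall>y\<in>VH. liftD E y - liftD D y = lap XH rH iH g1 y" using lift_equiv[OF E] by blast
    have "\<forall>z\<in>VH. liftD E z = D0 z + lap XH rH iH (\<lambda>z. g1 z - g0 z) z"
      unfolding lap_diff D0_def
    proof
      fix z assume z: "z \<in> VH"
      have "liftD E0 z - liftD D z = lap XH rH iH g0 z" using g0 z by blast
      moreover have "liftD E z - liftD D z = lap XH rH iH g1 z" using g1 z by blast
      ultimately show "liftD E z = liftD E0 z + (lap XH rH iH g1 z - lap XH rH iH g0 z)" by simp
    qed
    thus ?thesis by blast
  qed
  have chipV: "\<exists>h. good XH rH iH D0 h \<and> 1 \<le> D0 (SV v) + lap XH rH iH h (SV v)" if v: "v \<in> V" for v
  proof -
    obtain E' where E': "E' \<in> linsys X r i l (\<lambda>x. D x - (if x = v then 1 else 0))" using Rv v by blast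
    define E where "E = (\<lambda>x. E' x + (if x = v then 1 else 0))"
    have E: "E \<in> divisors X r" "effective E" "lin_equiv X r i l E D" using shift[OF E' v] unfolding E_def by auto
    obtain h where h: "\<forall>z\<in>VH. liftD E z = D0 z + lap XH rH iH h z" using pot[OF E(3)] by blast
    have "good XH rH iH D0 h" unfolding good_def
    proof
      fix z assume z: "z \<in> VH"
      have "0 \<le> liftD E z" using E(2) unfolding liftD_def effective_def by (auto split: snode.split)
      thus "0 \<le> D0 z + lap XH rH iH h z" using h z by simp
    qed
    moreover have "SV v \<in> VH" using v VH_eq by auto
    moreover have "1 \<le> liftD E (SV v)" using E' unfolding liftD_def E_def linsys_def effective_def by auto
    ultimately show ?thesis using h by auto
  qed
  have chip: "\<exists>h. good XH rH iH D0 h \<and> 1 \<le> D0 y + lap XH rH iH h y" if y: "y \<in> VH" for y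
  proof -
    have "y \<in> SV ` V \<or> y \<in> SMset" using y VH_eq by auto
    thus ?thesis
    proof
      assume "y \<in> SV ` V" thus ?thesis using chipV by auto
    next
      assume "y \<in> SMset"
      then obtain c m where cm: "y = SM c m" "c \<in> HE" "edge_rep i c = c" "1 \<le> m" "m < l c"
        unfolding SMset_def by auto
      have s: "sn c m = SM c m" unfolding sub_node_def using cm by auto
      have x0: "sn c 0 = SV (r c)" unfolding sub_node_def by simp
      have xk: "sn c (l c) = SV (r (i c))" unfolding sub_node_def using lp[OF cm(2)] by simp
      have hu: "\<exists>h. good XH rH iH D0 h \<and> 1 \<le> D0 (sn c 0) + lap XH rH iH h (sn c 0)"
        unfolding x0 using chipV stcD(3)[OF st cm(2)] by blast
      have hw: "\<exists>h. good XH rH iH D0 h \<and> 1 \<le> D0 (sn c (l c)) + lap XH rH iH h (sn c (l c))"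
        unfolding xk using chipV stcD(4)[OF st cm(2)] by blast
      have pc: "pathc XH rH iH D0 (sn c) (l c) (\<lambda>n. SE (i c) (l c - n)) (\<lambda>n. SE c n)"
        unfolding D0_def by (rule pathc_sub[OF cm(2,3) nl])
      obtain h where h: "good XH rH iH D0 h" "1 \<le> lap XH rH iH h (sn c m)"
        using key[OF stcH cnH D0nn pc inj_sub[OF cm(2,3) nl] _ _ hu hw, of m] cm by force
      have "D0 y = 0" unfolding D0_def cm(1) liftD_def by simp
      thus ?thesis using h s cm(1) by auto
    qed
  qed
  have "\<forall>y\<in>VH. linsys XH rH iH unit_len (\<lambda>z. liftD D z - (if z = y then 1 else 0)) \<noteq> {}"
  proof
    fix y assume y: "y \<in> VH"
    obtain h where h: "good XH rH iH D0 h" "1 \<le> D0 y + lap XH rH iH h y" using chip[OF y] by blast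
    define E where "E = (\<lambda>z. if z \<in> VH then D0 z + lap XH rH iH h z - (if z = y then 1 else 0) else 0)"
    have "E \<in> linsys XH rH iH unit_len (\<lambda>z. liftD D z - (if z = y then 1 else 0))"
      unfolding linsys_def
    proof (intro CollectI conjI)
      show "E \<in> divisors XH rH" unfolding E_def divisors_def by auto
      show "effective E" unfolding effective_def E_def using h unfolding good_def by auto
      have "(\<lambda>z. E z - (liftD D z - (if z = y then 1 else 0))) =
          laplacian XH rH iH unit_len (\<lambda>z. g0 z + h z)"
      proof
        fix z
        show "E z - (liftD D z - (if z = y then 1 else 0)) = laplacian XH rH iH unit_len (\<lambda>z. g0 z + h z) z"
        proof (cases "z \<in> VH")
          case True
          thus ?thesis unfolding laplacianH lap_add E_def D0_def using g0 by auto
        next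
          case False
          thus ?thesis unfolding laplacianH E_def using lift_out[OF D False] y by auto
        qed
      qed
      thus "lin_equiv XH rH iH unit_len E (\<lambda>z. liftD D z - (if z = y then 1 else 0))"
        unfolding lin_equiv_def using PLH by blast
    qed
    thus "linsys XH rH iH unit_len (\<lambda>z. liftD D z - (if z = y then 1 else 0)) \<noteq> {}" by blast
  qed
  moreover have "liftD D \<in> divisors XH rH" unfolding divisors_def using lift_out[OF D] by auto
  ultimately show ?thesis using rank_ge1_iff[OF gsH] by blast
qed

end

theorem lemma4p10:
  fixes X :: "'a set" and r i :: "'a \<Rightarrow> 'a" and l :: "'a \<Rightarrow> nat"
  assumes "is_Nmetrised_graph X r i l"
    and "\<forall>e\<in>half_edges X r. r e \<noteq> r (i e)"
  shows "dgon X r i l \<ge> dgon (subd_X X r i l) (subd_r r i l) (subd_i i l) unit_len"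
proof -
  have G: "is_graph X r i" and L: "\<forall>x\<in>X. l (i x) = l x \<and> (l x = 0 \<longleftrightarrow> r x = x)"
    using assms(1) unfolding is_Nmetrised_graph_def by auto
  have fin: "finite X" and ne: "X \<noteq> {}"
    and ax: "\<forall>x\<in>X. r x \<in> X \<and> i x \<in> X \<and> r (r x) = r x \<and> i (i x) = x \<and> (i x = x \<longleftrightarrow> r x = x)"
    and cn: "conn X r i"
    using G unfolding is_graph_def conn_def by auto
  have he: "e \<in> half_edges X r \<Longrightarrow> e \<in> X \<and> r e \<noteq> e" for e unfolding half_edges_def by auto
  have st: "stc X r i" unfolding stc_def
  proof (intro conjI fin ballI)
    fix e assume e: "e \<in> half_edges X r"
    have eX: "e \<in> X" "r e \<noteq> e" using he[OF e] by auto
    have ie: "i e \<noteq> e" using ax eX by auto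
    have ii: "i (i e) = e" using ax eX by auto
    have iX: "i e \<in> X" using ax eX by auto
    have "r (i e) \<noteq> i e" using ax iX ii ie by metis
    thus "i e \<in> half_edges X r" unfolding half_edges_def using iX by auto
    show "i (i e) = e" by (rule ii)
    show "r e \<in> vertices X r" unfolding vertices_def using ax eX by auto
  qed
  have gsG: "gs X r i l" unfolding gs_def
  proof (intro conjI st ballI)
    obtain x where "x \<in> X" using ne by auto
    hence "r x \<in> vertices X r" unfolding vertices_def using ax by auto
    thus "vertices X r \<noteq> {}" by auto
    fix e assume "e \<in> half_edges X r" thus "l (i e) = l e" using L he by auto
  qed
  have lpos: "\<forall>e\<in>half_edges X r. 1 \<le> l e" using L he by (metis One_nat_def Suc_leI neq0_conv)
  have ine: "\<forall>e\<in>half_edges X r. i e \<noteq> e" using ax he by auto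
  interpret subdiv X r i l using gsG lpos ine by unfold_locales auto
  obtain D where D: "D \<in> divisors X r" "1 \<le> rank X r i l D" "deg X r D = dgon X r i l"
    using dgon_props[OF gsG] by blast
  have "1 \<le> rank XH rH iH unit_len (liftD D)" by (rule main_sub[OF assms(2) cn D(1,2)])
  moreover have "liftD D \<in> divisors XH rH" unfolding divisors_def using lift_out[OF D(1)] by auto
  ultimately have "dgon XH rH iH unit_len \<le> deg XH rH (liftD D)" using dgon_props[OF gsH] by blast
  thus ?thesis using deg_lift[OF D(1)] D(3) by simp
qed


end
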